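(* Let $R$ be a $K$-algebra, $J$ an ideal of $R$ which is locally f.d.ss, and $T$ a finite dimensional semisimple subalgebra of $R$ such that $R = T \oplus J$ as $K$-vector spaces. Then $R$ is locally f.d.ss if and only if the following holds: for every finite subset $Y \subseteq J$ there is an idempotent $e \in J$ such that $Y \subseteq eJe$ and $et = te$ for all $t \in T$.
   Context: $K$ is a field. All algebras are associative but not necessarily unital $K$-algebras; ideals are two-sided ring ideals that are also $K$-subspaces. A $K$-algebra $R$ is locally f.d.ss if every finite subset of $R$ is contained in a subalgebra of $R$ that is a finite dimensional semisimple $K$-algebra. *)

theory Defs
  imports Main "HOL.Vector_Spaces"
begin

text \<open>A (not necessarily unital) associative K-algebra: the carrier is the whole type 'a,
  a ring in the type-class sense (class ring does not require a unit),
  with a K-vector space structure given by scale, compatible with multiplication.\<close>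
definition K_algebra :: "('k::field \<Rightarrow> 'a::ring \<Rightarrow> 'a) \<Rightarrow> bool" where
  "K_algebra scale \<longleftrightarrow> vector_space scale \<and>
     (\<forall>c x y. scale c (x * y) = scale c x * y \<and> scale c (x * y) = x * scale c y)"

definition subalgebra :: "('k::field \<Rightarrow> 'a::ring \<Rightarrow> 'a) \<Rightarrow> 'a set \<Rightarrow> bool" where
  "subalgebra scale S \<longleftrightarrow> module.subspace scale S \<and> (\<forall>x\<in>S. \<forall>y\<in>S. x * y \<in> S)"

definition ideal_of :: "('k::field \<Rightarrow> 'a::ring \<Rightarrow> 'a) \<Rightarrow> 'a set \<Rightarrow> 'a set \<Rightarrow> bool" where
  "ideal_of scale S I \<longleftrightarrow> I \<subseteq> S \<and> module.subspace scale I \<and>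
     (\<forall>s\<in>S. \<forall>x\<in>I. s * x \<in> I \<and> x * s \<in> I)"

definition fin_dim :: "('k::field \<Rightarrow> 'a::ring \<Rightarrow> 'a) \<Rightarrow> 'a set \<Rightarrow> bool" where
  "fin_dim scale S \<longleftrightarrow> (\<exists>B. finite B \<and> B \<subseteq> S \<and> module.span scale B = S)"

text \<open>Product of a nonempty list (non-unital setting).\<close>
fun nprod :: "'a::ring list \<Rightarrow> 'a" where
  "nprod [] = 0"
| "nprod [x] = x"
| "nprod (x # y # xs) = x * nprod (y # xs)"

definition nilpotent_set :: "'a::ring set \<Rightarrow> bool" where
  "nilpotent_set I \<longleftrightarrow> (\<exists>n\<ge>1. \<forall>xs. length xs = n \<and> set xs \<subseteq> I \<longrightarrow> nprod xs = 0)"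

text \<open>A finite dimensional algebra is semisimple iff its (Jacobson) radical, which is the largest
  nilpotent ideal, vanishes, i.e. iff it has no nonzero nilpotent ideal.\<close>
definition fdss_subalgebra :: "('k::field \<Rightarrow> 'a::ring \<Rightarrow> 'a) \<Rightarrow> 'a set \<Rightarrow> bool" where
  "fdss_subalgebra scale S \<longleftrightarrow> subalgebra scale S \<and> fin_dim scale S \<and>
     (\<forall>I. ideal_of scale S I \<and> nilpotent_set I \<longrightarrow> I = {0})"

definition locally_fdss :: "('k::field \<Rightarrow> 'a::ring \<Rightarrow> 'a) \<Rightarrow> 'a set \<Rightarrow> bool" where
  "locally_fdss scale A \<longleftrightarrow> (\<forall>F. finite F \<and> F \<subseteq> A \<longrightarrow>
     (\<exists>S. F \<subseteq> S \<and> S \<subseteq> A \<and> fdss_subalgebra scale S))"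

end

theory Submission
  imports Defs
begin


locale kalg = vector_space scale for scale :: "'k::field \<Rightarrow> 'a::ring \<Rightarrow> 'a" +
  assumes msl: "scale c (x*y) = scale c x * y" and msr: "scale c (x*y) = x * scale c y"
begin

definition sp :: "'a set \<Rightarrow> bool" where
  "sp S \<longleftrightarrow> (\<forall>x\<in>S. x*x = 0 \<and> (\<forall>a\<in>S. x*a*x = 0) \<longrightarrow> x = 0)"

definition fd :: "'a set \<Rightarrow> bool" where
  "fd S \<longleftrightarrow> (\<exists>W. finite W \<and> S \<subseteq> span W)"

definition salg :: "'a set \<Rightarrow> bool" where
  "salg S \<longleftrightarrow> subspace S \<and> (\<forall>x\<in>S. \<forall>y\<in>S. x * y \<in> S)"

lemma modl: "module scale" using module_iff_vector_space vector_space_axioms by blast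

lemma hom_l: "module_hom scale scale (\<lambda>x. a * x)"
  unfolding module_hom_iff using modl msr by (simp add: distrib_left)
lemma hom_r: "module_hom scale scale (\<lambda>x. x * a)"
  unfolding module_hom_iff using modl msl by (simp add: distrib_right)
lemma hom_lr: "module_hom scale scale (\<lambda>x. a * x * b)"
  unfolding module_hom_iff using modl msl msr by (simp add: distrib_right distrib_left)

lemma span_l: "x \<in> span G \<Longrightarrow> a * x \<in> span ((\<lambda>x. a * x) ` G)"
  using module_hom.span_image[OF hom_l[of a], of G] by auto
lemma span_r: "x \<in> span G \<Longrightarrow> x * a \<in> span ((\<lambda>x. x * a) ` G)"
  using module_hom.span_image[OF hom_r[of a], of G] by auto
lemma span_lr: "span ((\<lambda>x. a * x * b) ` G) = (\<lambda>x. a * x * b) ` span G"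
  using module_hom.span_image[OF hom_lr[of a b], of G] by auto
lemma subspace_lr: "subspace S \<Longrightarrow> subspace ((\<lambda>x. a * x * b) ` S)"
  using module_hom.subspace_image[OF hom_lr] by blast
lemma subspace_l: "subspace S \<Longrightarrow> subspace ((\<lambda>x. a * x) ` S)"
  using module_hom.subspace_image[OF hom_l] by blast

lemma span_zero_set: "G \<subseteq> {0} \<Longrightarrow> u \<in> span G \<Longrightarrow> u = 0"
  using span_mono[of G "{0}"] span_empty span_insert_0 by auto

lemma span_prod_zero:
  assumes "\<forall>g\<in>G. \<forall>h\<in>H. g*h = 0" "u \<in> span G" "v \<in> span H"
  shows "u * v = 0"
proof -
  have "\<forall>g\<in>G. g * v = 0"
  proof
    fix g assume "g \<in> G"
    have "g * v \<in> span ((\<lambda>x. g * x) ` H)" using span_l assms(3) by blast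
    moreover have "(\<lambda>x. g * x) ` H \<subseteq> {0}" using assms(1) \<open>g\<in>G\<close> by auto
    ultimately show "g * v = 0" using span_zero_set by blast
  qed
  then have "(\<lambda>x. x * v) ` G \<subseteq> {0}" by auto
  then show ?thesis using span_r[OF assms(2), of v] span_zero_set by blast
qed

lemma subspace_eq_dim:
  assumes "subspace S" "subspace T" "S \<subseteq> T" "finite W" "T \<subseteq> span W" "dim T \<le> dim S"
  shows "S = T"
proof (rule ccontr)
  assume "S \<noteq> T"
  then obtain x where x: "x \<in> T" "x \<notin> S" using assms(3) by auto
  obtain BS where BS: "BS \<subseteq> S" "independent BS" "S \<subseteq> span BS" "card BS = dim S"
    using basis_exists by blast
  have "span BS = S" using span_subspace BS assms(1) by blast
  then have "x \<notin> span BS" using x by simp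
  then have ind: "independent (insert x BS)" using independent_insertI BS by blast
  obtain BT where BT: "BT \<subseteq> T" "independent BT" "T \<subseteq> span BT" "card BT = dim T"
    using basis_exists by blast
  have fBT: "finite BT" using independent_span_bound[OF assms(4) BT(2)] BT(1) assms(5) by blast
  have "insert x BS \<subseteq> span BT" using BS BT x assms(3) by auto
  from independent_span_bound[OF fBT ind this]
  have "finite (insert x BS)" "card (insert x BS) \<le> card BT" by auto
  moreover have "x \<notin> BS" using x(2) BS(1) by blast
  ultimately have "Suc (card BS) \<le> card BT" by simp
  then show False using assms(6) BS(4) BT(4) by linarith
qed

lemma fd_fin_dim: assumes "subspace S" "fd S" shows "fin_dim scale S"
proof -
  obtain W where W: "finite W" "S \<subseteq> span W" using assms(2) unfolding fd_def by blast
  obtain B where B: "B \<subseteq> S" "independent B" "S \<subseteq> span B" "card B = dim S" by (rule basis_exists)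
  have "B \<subseteq> span W" using B(1) W(2) by (rule order_trans)
  then have "finite B" using independent_span_bound[OF W(1) B(2)] by simp
  moreover have "span B = S" using span_subspace[OF B(1) B(3) assms(1)] .
  ultimately show ?thesis unfolding fin_dim_def using B(1) by (intro exI[of _ B]) simp
qed

lemma fin_dim_fd: "fin_dim scale S \<Longrightarrow> fd S"
  unfolding fin_dim_def fd_def by auto

lemma fd_mono: "fd T \<Longrightarrow> S \<subseteq> T \<Longrightarrow> fd S"
  unfolding fd_def by blast

end

lemma nprod_append1: "xs \<noteq> [] \<Longrightarrow> nprod (xs @ [y]) = nprod xs * y"
  by (induction xs rule: nprod.induct) (auto simp: mult.assoc)

lemma nprod_in: "xs \<noteq> [] \<Longrightarrow> set xs \<subseteq> I \<Longrightarrow> (\<forall>x\<in>I. \<forall>y\<in>I. x*y \<in> I) \<Longrightarrow> nprod xs \<in> I"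
  by (induction xs rule: nprod.induct) auto



context kalg begin

lemma subalgebra_salg: "subalgebra scale S \<longleftrightarrow> salg S"
  unfolding subalgebra_def salg_def by simp

lemma nilp_sp:
  assumes S: "salg S" and sp: "sp S" and I: "ideal_of scale S I" and nil: "nilpotent_set I"
  shows "I = {0}"
proof -
  have IS: "I \<subseteq> S" and Isub: "subspace I" and Iid: "\<forall>s\<in>S. \<forall>x\<in>I. s * x \<in> I \<and> x * s \<in> I"
    using I unfolding ideal_of_def by auto
  have Imul: "\<forall>x\<in>I. \<forall>y\<in>I. x*y \<in> I" using IS Iid by blast
  define P where "P n \<longleftrightarrow> n \<ge> 1 \<and> (\<forall>xs. length xs = n \<and> set xs \<subseteq> I \<longrightarrow> nprod xs = 0)" for n
  obtain n0 where "P n0" using nil unfolding nilpotent_set_def P_def by blast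
  then obtain n where n: "P n" and nmin: "\<And>k. P k \<Longrightarrow> n \<le> k"
    using ex_has_least_nat[of P n0 id] by auto
  show ?thesis
  proof (cases "n = 1")
    case True
    have "x = 0" if "x \<in> I" for x
    proof -
      have "\<forall>xs. length xs = n \<and> set xs \<subseteq> I \<longrightarrow> nprod xs = 0" using n unfolding P_def by blast
      moreover have "length [x] = n \<and> set [x] \<subseteq> I" using True that by simp
      ultimately have "nprod [x] = 0" by blast
      then show ?thesis by simp
    qed
    then show ?thesis using subspace_0[OF Isub] by blast
  next
    case False
    then have n2: "n \<ge> 2" using n unfolding P_def by auto
    have "\<not> P (n-1)" using nmin[of "n-1"] n2 by auto
    then obtain xs where xs: "length xs = n - 1" "set xs \<subseteq> I" "nprod xs \<noteq> 0"
      using n2 unfolding P_def by auto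
    have ne: "xs \<noteq> []" using xs(1) n2 by auto
    define p where "p = nprod xs"
    have pI: "p \<in> I" unfolding p_def using nprod_in[OF ne xs(2) Imul] .
    have pS: "p \<in> S" using pI IS by auto
    have Pn: "nprod ys = 0" if "length ys = n" "set ys \<subseteq> I" for ys using n that unfolding P_def by auto
    have "p * p = 0"
    proof -
      have "nprod (xs @ [p]) = 0" using Pn[of "xs @ [p]"] xs pI n2 by auto
      then show ?thesis using nprod_append1[OF ne] p_def by simp
    qed
    moreover have "p * a * p = 0" if "a \<in> S" for a
    proof -
      have apI: "a * p \<in> I" using Iid that pI by blast
      have "nprod (xs @ [a*p]) = 0" using Pn[of "xs @ [a*p]"] xs apI n2 by auto
      then show ?thesis using nprod_append1[OF ne] p_def by (simp add: mult.assoc)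
    qed
    ultimately have "p = 0" using sp pS unfolding sp_def by blast
    then show ?thesis using xs(3) p_def by simp
  qed
qed

lemma sp_nilp:
  assumes S: "salg S" and H: "\<forall>I. ideal_of scale S I \<and> nilpotent_set I \<longrightarrow> I = {0}"
  shows "sp S"
  unfolding sp_def
proof (intro ballI impI)
  fix x assume xS: "x \<in> S" and xx: "x * x = 0 \<and> (\<forall>a\<in>S. x * a * x = 0)"
  have Ssub: "subspace S" and Smul: "\<forall>a\<in>S. \<forall>b\<in>S. a*b \<in> S" using S unfolding salg_def by auto
  have Z2: "x*x = 0" using xx by blast
  have Z5: "x*(x*z) = 0" for z using Z2 by (simp add: mult.assoc[symmetric])
  have Z1: "x*(a*x) = 0" if "a \<in> S" for a using xx that by (simp add: mult.assoc)
  have Z3: "x*(a*(x*z)) = 0" if "a \<in> S" for a z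
  proof -
    have "x*(a*(x*z)) = (x*(a*x))*z" by (simp add: mult.assoc)
    then show ?thesis using Z1[OF that] by simp
  qed
  have Z6: "x*(a*(b*x)) = 0" if "a \<in> S" "b \<in> S" for a b
  proof -
    have "x*(a*(b*x)) = x*((a*b)*x)" by (simp add: mult.assoc)
    then show ?thesis using Z1 Smul that by simp
  qed
  have Z4: "x*(a*(b*(x*z))) = 0" if "a \<in> S" "b \<in> S" for a b z
  proof -
    have "x*(a*(b*(x*z))) = x*((a*b)*(x*z))" by (simp add: mult.assoc)
    then show ?thesis using Z3 Smul that by simp
  qed
  define G where "G = {x} \<union> {a*x | a. a\<in>S} \<union> {x*b | b. b\<in>S} \<union> {a*x*b | a b. a\<in>S \<and> b\<in>S}"
  have GS: "G \<subseteq> S" unfolding G_def using xS Smul by auto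
  define L where "L = span G"
  have LS: "L \<subseteq> S" unfolding L_def using span_minimal[OF GS Ssub] .
  have lG: "(\<lambda>y. s*y) ` G \<subseteq> G" if "s \<in> S" for s
  proof
    fix z assume "z \<in> (\<lambda>y. s*y) ` G"
    then obtain y where y: "y \<in> G" "z = s*y" by auto
    have "y \<in> {x} \<union> {a*x | a. a\<in>S} \<union> {x*b | b. b\<in>S} \<union> {a*x*b | a b. a\<in>S \<and> b\<in>S}" using y G_def by simp
    then consider "y = x" | a where "y = a*x" "a \<in> S" | b where "y = x*b" "b \<in> S"
      | a b where "y = a*x*b" "a \<in> S" "b \<in> S" by blast
    then show "z \<in> G" unfolding G_def
    proof cases
      case 1 then show "z \<in> {x} \<union> {a*x | a. a\<in>S} \<union> {x*b | b. b\<in>S} \<union> {a*x*b | a b. a\<in>S \<and> b\<in>S}"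
        using y that by blast
    next
      case (2 a)
      then have "z = (s*a)*x" "s*a \<in> S" using y that Smul by (auto simp: mult.assoc)
      then show "z \<in> {x} \<union> {a*x | a. a\<in>S} \<union> {x*b | b. b\<in>S} \<union> {a*x*b | a b. a\<in>S \<and> b\<in>S}" by blast
    next
      case (3 b)
      then have "z = s*x*b" using y by (auto simp: mult.assoc)
      then show "z \<in> {x} \<union> {a*x | a. a\<in>S} \<union> {x*b | b. b\<in>S} \<union> {a*x*b | a b. a\<in>S \<and> b\<in>S}"
        using that \<open>b\<in>S\<close> by blast
    next
      case (4 a b)
      then have "z = (s*a)*x*b" "s*a \<in> S" using y that Smul by (auto simp: mult.assoc)
      then show "z \<in> {x} \<union> {a*x | a. a\<in>S} \<union> {x*b | b. b\<in>S} \<union> {a*x*b | a b. a\<in>S \<and> b\<in>S}"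
        using \<open>b\<in>S\<close> by blast
    qed
  qed
  have rG: "(\<lambda>y. y*s) ` G \<subseteq> G" if "s \<in> S" for s
  proof
    fix z assume "z \<in> (\<lambda>y. y*s) ` G"
    then obtain y where y: "y \<in> G" "z = y*s" by auto
    have "y \<in> {x} \<union> {a*x | a. a\<in>S} \<union> {x*b | b. b\<in>S} \<union> {a*x*b | a b. a\<in>S \<and> b\<in>S}" using y G_def by simp
    then consider "y = x" | a where "y = a*x" "a \<in> S" | b where "y = x*b" "b \<in> S"
      | a b where "y = a*x*b" "a \<in> S" "b \<in> S" by blast
    then show "z \<in> G" unfolding G_def
    proof cases
      case 1 then show "z \<in> {x} \<union> {a*x | a. a\<in>S} \<union> {x*b | b. b\<in>S} \<union> {a*x*b | a b. a\<in>S \<and> b\<in>S}"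
        using y that by blast
    next
      case (2 a)
      then have "z = a*x*s" using y by (auto simp: mult.assoc)
      then show "z \<in> {x} \<union> {a*x | a. a\<in>S} \<union> {x*b | b. b\<in>S} \<union> {a*x*b | a b. a\<in>S \<and> b\<in>S}"
        using that \<open>a\<in>S\<close> by blast
    next
      case (3 b)
      then have "z = x*(b*s)" "b*s \<in> S" using y that Smul by (auto simp: mult.assoc)
      then show "z \<in> {x} \<union> {a*x | a. a\<in>S} \<union> {x*b | b. b\<in>S} \<union> {a*x*b | a b. a\<in>S \<and> b\<in>S}" by blast
    next
      case (4 a b)
      then have "z = a*x*(b*s)" "b*s \<in> S" using y that Smul by (auto simp: mult.assoc)
      then show "z \<in> {x} \<union> {a*x | a. a\<in>S} \<union> {x*b | b. b\<in>S} \<union> {a*x*b | a b. a\<in>S \<and> b\<in>S}"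
        using \<open>a\<in>S\<close> by blast
    qed
  qed
  have "ideal_of scale S L"
    unfolding ideal_of_def
  proof (intro conjI ballI)
    show "L \<subseteq> S" by (rule LS)
    show "subspace L" unfolding L_def by simp
  next
    fix s y assume "s \<in> S" "y \<in> L"
    show "s * y \<in> L" using span_l[of y G s] \<open>y\<in>L\<close> span_mono[OF lG[OF \<open>s\<in>S\<close>]] unfolding L_def by blast
    show "y * s \<in> L" using span_r[of y G s] \<open>y\<in>L\<close> span_mono[OF rG[OF \<open>s\<in>S\<close>]] unfolding L_def by blast
  qed
  moreover have "nilpotent_set L"
    unfolding nilpotent_set_def
  proof (intro exI[of _ 2] conjI allI impI)
    fix xs :: "'a list" assume xs: "length xs = 2 \<and> set xs \<subseteq> L"
    then obtain u v where uv: "xs = [u, v]"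
      by (metis (no_types, lifting) One_nat_def Suc_1 length_0_conv length_Suc_conv)
    have GG: "\<forall>g\<in>G. \<forall>h\<in>G. g*h = 0"
      unfolding G_def using xS
      by (auto simp: mult.assoc Z1 Z2 Z3 Z4 Z5 Z6)
    have "u * v = 0" using span_prod_zero[OF GG] xs uv unfolding L_def by auto
    then show "nprod xs = 0" using uv by simp
  qed simp
  ultimately have "L = {0}" using H by blast
  moreover have "x \<in> L" unfolding L_def G_def by (rule span_base) simp
  ultimately show "x = 0" by blast
qed

lemma sp_iff: "salg S \<Longrightarrow> (\<forall>I. ideal_of scale S I \<and> nilpotent_set I \<longrightarrow> I = {0}) \<longleftrightarrow> sp S"
  using sp_nilp nilp_sp by blast

lemma fdss_iff: "fdss_subalgebra scale S \<longleftrightarrow> salg S \<and> fd S \<and> sp S"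
  unfolding fdss_subalgebra_def subalgebra_salg
  using sp_iff fd_fin_dim fin_dim_fd salg_def by blast

end


context kalg begin

lemma idem_exists:
  assumes V: "salg V" "fd V" "sp V" "V \<noteq> {0}"
  shows "\<exists>f\<in>V. f \<noteq> 0 \<and> f*f = f"
proof -
  obtain W where W: "finite W" "V \<subseteq> span W" using V(2) unfolding fd_def by blast
  have Vsub: "subspace V" and Vmul: "\<forall>a\<in>V. \<forall>b\<in>V. a*b \<in> V" using V(1) unfolding salg_def by auto
  define RI where "RI L \<longleftrightarrow> subspace L \<and> L \<subseteq> V \<and> (\<forall>l\<in>L. \<forall>v\<in>V. l*v \<in> L) \<and> L \<noteq> {0}" for L
  have "RI V" unfolding RI_def using Vsub Vmul V(4) by blast
  then obtain L where L: "RI L" and Lmin: "\<And>L'. RI L' \<Longrightarrow> dim L \<le> dim L'"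
    using ex_has_least_nat[of RI V dim] by blast
  have Lsub: "subspace L" and LV: "L \<subseteq> V" and Lr: "\<forall>l\<in>L. \<forall>v\<in>V. l*v \<in> L" and Lne: "L \<noteq> {0}"
    using L unfolding RI_def by auto
  have minL: "L' = L" if "RI L'" "L' \<subseteq> L" for L'
  proof (rule subspace_eq_dim[OF _ Lsub that(2) W(1)])
    show "subspace L'" using that(1) unfolding RI_def by blast
    show "L \<subseteq> span W" using LV W(2) by blast
    show "dim L \<le> dim L'" using Lmin[OF that(1)] .
  qed
  obtain x where x: "x \<in> L" "x \<noteq> 0" using Lne subspace_0[OF Lsub] by blast
  have xV: "x \<in> V" using x LV by blast
  obtain l where l: "l \<in> L" "l * x \<noteq> 0"
  proof (cases "x * x = 0")
    case False then show ?thesis using that x by blast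
  next
    case True
    then obtain a where "a \<in> V" "x*a*x \<noteq> 0" using V(3) xV x(2) unfolding sp_def by blast
    moreover have "x*a \<in> L" using Lr x(1) \<open>a\<in>V\<close> by blast
    ultimately show ?thesis using that by blast
  qed
  have lV: "l \<in> V" using l LV by blast
  define lL where "lL = (\<lambda>m. l*m) ` L"
  have "RI lL" unfolding RI_def
  proof (intro conjI ballI)
    show "subspace lL" unfolding lL_def using subspace_l[OF Lsub] .
    show "lL \<subseteq> V" unfolding lL_def using Vmul lV LV by blast
    show "lL \<noteq> {0}" unfolding lL_def using l x(1) by blast
  next
    fix y v assume "y \<in> lL" "v \<in> V"
    then obtain m where "m \<in> L" "y = l*m" unfolding lL_def by blast
    then have "y*v = l*(m*v)" "m*v \<in> L" using Lr \<open>v\<in>V\<close> by (auto simp: mult.assoc)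
    then show "y*v \<in> lL" unfolding lL_def by blast
  qed
  moreover have "lL \<subseteq> L" unfolding lL_def using Lr l(1) LV by blast
  ultimately have "lL = L" using minL by blast
  then obtain f where f: "f \<in> L" "l = l*f" using l(1) unfolding lL_def by blast
  define R' where "R' = {m\<in>L. l*m = 0}"
  have R'sub: "subspace R'" unfolding R'_def
  proof (rule subspaceI)
    show "0 \<in> {m \<in> L. l * m = 0}" using subspace_0[OF Lsub] by simp
  next
    fix m m' assume "m \<in> {m \<in> L. l * m = 0}" "m' \<in> {m \<in> L. l * m = 0}"
    then show "m + m' \<in> {m \<in> L. l * m = 0}" using subspace_add[OF Lsub] by (simp add: distrib_left)
  next
    fix c m assume "m \<in> {m \<in> L. l * m = 0}"
    then show "scale c m \<in> {m \<in> L. l * m = 0}" using subspace_scale[OF Lsub] msr[of c l m, symmetric] by simp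
  qed
  have "R' = {0}"
  proof (rule ccontr)
    assume ne: "R' \<noteq> {0}"
    have "RI R'" unfolding RI_def
    proof (intro conjI ballI)
      show "subspace R'" by (rule R'sub)
      show "R' \<subseteq> V" unfolding R'_def using LV by blast
      show "R' \<noteq> {0}" by (rule ne)
    next
      fix m v assume "m \<in> R'" "v \<in> V"
      then show "m*v \<in> R'" unfolding R'_def using Lr by (auto simp: mult.assoc[symmetric])
    qed
    moreover have "R' \<subseteq> L" unfolding R'_def by blast
    ultimately have "R' = L" using minL by blast
    then have "l*f = 0" using f(1) unfolding R'_def by blast
    then show False using f(2) l(2) by simp
  qed
  moreover have "f*f - f \<in> R'"
  proof -
    have "f*f \<in> L" using Lr f(1) LV by blast
    then have "f*f - f \<in> L" using subspace_diff[OF Lsub _ f(1)] by blast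
    moreover have "l*(f*f - f) = 0"
    proof -
      have "l*(f*f - f) = (l*f)*f - l*f" by (simp add: right_diff_distrib mult.assoc)
      also have "\<dots> = 0" using f(2)[symmetric] by simp
      finally show ?thesis .
    qed
    ultimately show ?thesis unfolding R'_def by blast
  qed
  ultimately have "f*f = f" by simp
  moreover have "f \<noteq> 0" using f(2) l(2) by auto
  ultimately show ?thesis using f(1) LV by blast
qed

end


context kalg begin

lemma unit_exists:
  assumes U: "salg U" "fd U" "sp U"
  shows "\<exists>e\<in>U. \<forall>y\<in>U. e*y = y \<and> y*e = y"
proof -
  obtain W where W: "finite W" "U \<subseteq> span W" using U(2) unfolding fd_def by blast
  have Usub: "subspace U" and Umul: "\<And>a b. a\<in>U \<Longrightarrow> b\<in>U \<Longrightarrow> a*b \<in> U" using U(1) unfolding salg_def by auto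
  define C where "C e = {x\<in>U. e*x = 0 \<and> x*e = 0}" for e
  define Q where "Q e \<longleftrightarrow> e \<in> U \<and> e*e = e" for e
  have "Q 0" unfolding Q_def using subspace_0[OF Usub] by simp
  then obtain e where e: "Q e" and emin: "\<And>e'. Q e' \<Longrightarrow> dim (C e) \<le> dim (C e')"
    using ex_has_least_nat[of Q 0 "\<lambda>e. dim (C e)"] by blast
  have eU: "e \<in> U" and ee: "e*e = e" using e unfolding Q_def by auto
  have ee2: "e*(e*z) = e*z" for z using ee by (simp add: mult.assoc[symmetric])
  have Csub: "subspace (C e')" for e'
    unfolding C_def
  proof (rule subspaceI)
    show "0 \<in> {x \<in> U. e' * x = 0 \<and> x * e' = 0}" using subspace_0[OF Usub] by simp
  next
    fix m m' assume "m \<in> {x \<in> U. e' * x = 0 \<and> x * e' = 0}" "m' \<in> {x \<in> U. e' * x = 0 \<and> x * e' = 0}"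
    then show "m + m' \<in> {x \<in> U. e' * x = 0 \<and> x * e' = 0}" using subspace_add[OF Usub]
      by (simp add: distrib_left distrib_right)
  next
    fix c m assume "m \<in> {x \<in> U. e' * x = 0 \<and> x * e' = 0}"
    then show "scale c m \<in> {x \<in> U. e' * x = 0 \<and> x * e' = 0}"
      using subspace_scale[OF Usub] msr[of c e' m, symmetric] msl[of c m e', symmetric] by simp
  qed
  have CU: "C e' \<subseteq> U" for e' unfolding C_def by blast
  have peirce: "a - e*a - a*e + e*a*e \<in> C e" if "a \<in> U" for a
  proof -
    have "a - e*a - a*e + e*a*e \<in> U"
      using that eU Umul subspace_diff[OF Usub] subspace_add[OF Usub] by simp
    moreover have "e*(a - e*a - a*e + e*a*e) = 0"
      by (simp add: algebra_simps ee2 mult.assoc)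
    moreover have "(a - e*a - a*e + e*a*e)*e = 0"
      by (simp add: algebra_simps ee mult.assoc)
    ultimately show ?thesis unfolding C_def by blast
  qed
  have spC: "sp (C e)" unfolding sp_def
  proof (intro ballI impI)
    fix y assume yC: "y \<in> C e" and H: "y*y = 0 \<and> (\<forall>a\<in>C e. y*a*y = 0)"
    have yU: "y \<in> U" and ey: "e*y = 0" and ye: "y*e = 0" using yC unfolding C_def by auto
    have ye2: "y*(e*z) = 0" for z using ye by (simp add: mult.assoc[symmetric])
    have "y*a*y = 0" if "a \<in> U" for a
    proof -
      have "y*(a - e*a - a*e + e*a*e)*y = 0" using H peirce[OF that] by blast
      moreover have "y*(a - e*a - a*e + e*a*e)*y = y*a*y"
        by (simp add: algebra_simps mult.assoc ey ye2)
      ultimately show ?thesis by simp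
    qed
    then show "y = 0" using U(3) yU H unfolding sp_def by blast
  qed
  have Ce0: "C e = {0}"
  proof (rule ccontr)
    assume ne: "C e \<noteq> {0}"
    have "salg (C e)" unfolding salg_def
    proof (intro conjI ballI)
      show "subspace (C e)" by (rule Csub)
    next
      fix x y assume "x \<in> C e" "y \<in> C e"
      then show "x*y \<in> C e" unfolding C_def using Umul
        by (auto simp: mult.assoc[symmetric]) (simp add: mult.assoc)
    qed
    moreover have "fd (C e)" using fd_mono[OF U(2) CU] .
    ultimately obtain f where f: "f \<in> C e" "f \<noteq> 0" "f*f = f" using idem_exists spC ne by blast
    have fU: "f \<in> U" and ef: "e*f = 0" and fe: "f*e = 0" using f(1) unfolding C_def by auto
    have Qe': "Q (e+f)" unfolding Q_def
      using subspace_add[OF Usub eU fU] by (simp add: algebra_simps ee ef fe f(3))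
    have sub: "C (e+f) \<subseteq> C e"
    proof
      fix x assume "x \<in> C (e+f)"
      then have xU: "x \<in> U" and h1: "e*x + f*x = 0" and h2: "x*e + x*f = 0"
        unfolding C_def by (auto simp: algebra_simps)
      have ef2: "e*(f*t) = 0" for t using ef by (simp add: mult.assoc[symmetric])
      have "e*(e*x + f*x) = e*x" by (simp add: algebra_simps ee2 ef2)
      then have "e*x = 0" using h1 by simp
      moreover have "(x*e + x*f)*e = x*e" by (simp add: algebra_simps ee fe mult.assoc)
      then have "x*e = 0" using h2 by simp
      ultimately show "x \<in> C e" unfolding C_def using xU by blast
    qed
    have "C (e+f) = C e"
    proof (rule subspace_eq_dim[OF Csub Csub sub W(1)])
      show "C e \<subseteq> span W" using CU W(2) by blast
      show "dim (C e) \<le> dim (C (e + f))" using emin[OF Qe'] .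
    qed
    moreover have "f \<notin> C (e+f)" unfolding C_def using f(2) f(3) ef by (simp add: algebra_simps)
    ultimately show False using f(1) by blast
  qed
  have right: "a*e = e*a*e" if aU: "a \<in> U" for a
  proof -
    define z where "z = a*e - e*a*e"
    have zU: "z \<in> U" unfolding z_def using Umul aU eU subspace_diff[OF Usub] by simp
    have ez: "e*z = 0" unfolding z_def by (simp add: algebra_simps ee2 mult.assoc)
    have ze: "z*e = z" unfolding z_def by (simp add: algebra_simps ee mult.assoc)
    have "z*z = 0"
    proof -
      have "z*z = (z*e)*z" using ze by simp
      then have "z*z = z*(e*z)" by (simp add: mult.assoc)
      then show ?thesis using ez by simp
    qed
    moreover have "z*b*z = 0" if bU: "b \<in> U" for b
    proof -
      define w where "w = z*(e*b) - z*(e*b*e)"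
      have wU: "w \<in> U" unfolding w_def using Umul zU eU bU subspace_diff[OF Usub] by simp
      have ez2: "e*(z*t) = 0" for t using ez by (simp add: mult.assoc[symmetric])
      have "e*w = 0" unfolding w_def by (simp add: algebra_simps ez2)
      moreover have "w*e = 0" unfolding w_def by (simp add: algebra_simps mult.assoc ee)
      ultimately have "w \<in> C e" unfolding C_def using wU by blast
      then have w0: "z*(e*b) = z*(e*b*e)" using Ce0 unfolding w_def by simp
      have "z*b*z = (z*e)*b*z" using ze by simp
      also have "\<dots> = (z*(e*b))*z" by (simp add: mult.assoc)
      also have "\<dots> = (z*(e*b*e))*z" using w0 by simp
      also have "\<dots> = z*e*b*(e*z)" by (simp add: mult.assoc)
      also have "\<dots> = 0" using ez by simp
      finally show ?thesis .
    qed
    ultimately have "z = 0" using U(3) zU unfolding sp_def by blast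
    then show ?thesis unfolding z_def by simp
  qed
  have left: "e*a = e*a*e" if aU: "a \<in> U" for a
  proof -
    define z where "z = e*a - e*a*e"
    have zU: "z \<in> U" unfolding z_def using Umul aU eU subspace_diff[OF Usub] by simp
    have ze: "z*e = 0" unfolding z_def by (simp add: algebra_simps ee mult.assoc)
    have ez: "e*z = z" unfolding z_def by (simp add: algebra_simps ee2 mult.assoc)
    have "z*z = 0"
    proof -
      have "z*z = z*(e*z)" using ez by simp
      then have "z*z = (z*e)*z" by (simp add: mult.assoc)
      then show ?thesis using ze by simp
    qed
    moreover have "z*b*z = 0" if bU: "b \<in> U" for b
    proof -
      define w where "w = (b*e)*z - (e*b*e)*z"
      have wU: "w \<in> U" unfolding w_def using Umul zU eU bU subspace_diff[OF Usub] by simp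
      have "w*e = 0" unfolding w_def by (simp add: algebra_simps mult.assoc ze)
      moreover have "e*w = 0" unfolding w_def by (simp add: algebra_simps mult.assoc ee2)
      ultimately have "w \<in> C e" unfolding C_def using wU by blast
      then have w0: "(b*e)*z = (e*b*e)*z" using Ce0 unfolding w_def by simp
      have "z*b*z = z*b*(e*z)" using ez by simp
      also have "\<dots> = z*((b*e)*z)" by (simp add: mult.assoc)
      also have "\<dots> = z*((e*b*e)*z)" using w0 by simp
      also have "\<dots> = (z*e)*b*e*z" by (simp add: mult.assoc)
      also have "\<dots> = 0" using ze by simp
      finally show ?thesis .
    qed
    ultimately have "z = 0" using U(3) zU unfolding sp_def by blast
    then show ?thesis unfolding z_def by simp
  qed
  have "e*y = y \<and> y*e = y" if yU: "y \<in> U" for y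
  proof -
    have h0: "y - e*y - y*e + e*y*e = 0" using peirce[OF yU] Ce0 by blast
    have gen: "\<And>y a b c::'a. y - a - b + c = 0 \<Longrightarrow> a = c \<Longrightarrow> b = c \<Longrightarrow> y = c"
      by simp
    have "y = e*y*e" using gen[OF h0 left[OF yU] right[OF yU]] .
    then show ?thesis using left[OF yU] right[OF yU] by metis
  qed
  then show ?thesis using eU by blast
qed

lemma ideal_unit:
  assumes A: "salg A" "fd A" "sp A" and I: "ideal_of scale A I"
  shows "\<exists>e\<in>I. e*e = e \<and> (\<forall>y\<in>I. e*y = y \<and> y*e = y) \<and> (\<forall>a\<in>A. e*a = a*e)"
proof -
  have IA: "I \<subseteq> A" and Isub: "subspace I" and Iid: "\<And>s x. s\<in>A \<Longrightarrow> x\<in>I \<Longrightarrow> s * x \<in> I \<and> x * s \<in> I"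
    using I unfolding ideal_of_def by auto
  have "salg I" unfolding salg_def using Isub Iid IA by blast
  moreover have "fd I" using fd_mono[OF A(2) IA] .
  moreover have "sp I" unfolding sp_def
  proof (intro ballI impI)
    fix y assume yI: "y \<in> I" and H: "y*y = 0 \<and> (\<forall>a\<in>I. y*a*y = 0)"
    have yA: "y \<in> A" using yI IA by blast
    have Il: "s * x \<in> I" if "s \<in> A" "x \<in> I" for s x using Iid[OF that] by blast
    have Ir: "x * s \<in> I" if "x \<in> I" "s \<in> A" for s x using Iid[OF that(2) that(1)] by blast
    have "y*a*y = 0" if aA: "a \<in> A" for a
    proof -
      define z where "z = y*a*y"
      have zA: "z \<in> A" unfolding z_def using Ir[OF Ir[OF yI aA] yA] IA by blast
      have in1: "a*y*y*a \<in> I" using Ir[OF Ir[OF Il[OF aA yI] yA] aA] .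
      have "z*z = y*(a*y*y*a)*y" unfolding z_def by (simp add: mult.assoc)
      then have "z*z = 0" using H in1 by simp
      moreover have "z*b*z = 0" if bA: "b \<in> A" for b
      proof -
        have in2: "a*y*b*y*a \<in> I" using Ir[OF Ir[OF Ir[OF Il[OF aA yI] bA] yA] aA] .
        have "z*b*z = y*(a*y*b*y*a)*y" unfolding z_def by (simp add: mult.assoc)
        then show ?thesis using H in2 by simp
      qed
      ultimately have "z = 0" using A(3) zA unfolding sp_def by blast
      then show ?thesis unfolding z_def .
    qed
    then show "y = 0" using A(3) yA H unfolding sp_def by blast
  qed
  ultimately obtain e where eI: "e \<in> I" and eu: "\<forall>y\<in>I. e*y = y \<and> y*e = y" using unit_exists by blast
  have "e*a = a*e" if "a \<in> A" for a
  proof -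
    have "e*a = e*a*e" using eu Iid[OF that eI] by simp
    also have "\<dots> = a*e" using eu Iid[OF that eI] by (simp add: mult.assoc)
    finally show ?thesis .
  qed
  then show ?thesis using eI eu by blast
qed

end


lemma kalgI: "K_algebra scale \<Longrightarrow> kalg scale"
  unfolding K_algebra_def kalg_def kalg_axioms_def by blast

theorem lemma4p2:
  fixes scale :: "'k::field \<Rightarrow> 'a::ring \<Rightarrow> 'a" and J T :: "'a set"
  assumes "K_algebra scale"
    and "ideal_of scale UNIV J"
    and "locally_fdss scale J"
    and "fdss_subalgebra scale T"
    and "T \<inter> J = {0}"
    and "\<forall>r. \<exists>t\<in>T. \<exists>j\<in>J. r = t + j"
  shows "locally_fdss scale UNIV \<longleftrightarrow>
    (\<forall>Y. finite Y \<and> Y \<subseteq> J \<longrightarrow>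
      (\<exists>e\<in>J. e * e = e \<and> Y \<subseteq> {e * j * e | j. j \<in> J} \<and> (\<forall>t\<in>T. e * t = t * e)))"
proof -
  interpret K: kalg scale using assms(1) by (rule kalgI)
  have Jsub: "K.subspace J" and Jl: "\<And>s x. x \<in> J \<Longrightarrow> s*x \<in> J" and Jr: "\<And>s x. x \<in> J \<Longrightarrow> x*s \<in> J"
    using assms(2) unfolding ideal_of_def by auto
  have Tss: "K.salg T" "K.fd T" "K.sp T" using assms(4) K.fdss_iff by auto
  obtain B where B: "finite B" "B \<subseteq> T" "K.span B = T"
    using assms(4) unfolding fdss_subalgebra_def fin_dim_def by blast
  have Tsub: "K.subspace T" and Tmul: "\<And>a b. a\<in>T \<Longrightarrow> b\<in>T \<Longrightarrow> a*b \<in> T" using Tss(1) unfolding K.salg_def by auto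
  show ?thesis
  proof
    assume LU: "locally_fdss scale UNIV"
    show "\<forall>Y. finite Y \<and> Y \<subseteq> J \<longrightarrow>
      (\<exists>e\<in>J. e * e = e \<and> Y \<subseteq> {e * j * e | j. j \<in> J} \<and> (\<forall>t\<in>T. e * t = t * e))"
    proof (intro allI impI)
      fix Y assume Y: "finite Y \<and> Y \<subseteq> J"
      obtain A where A: "Y \<union> B \<subseteq> A" "fdss_subalgebra scale A"
        using LU Y B(1) unfolding locally_fdss_def by (metis finite_Un subset_UNIV)
      have Ass: "K.salg A" "K.fd A" "K.sp A" using A(2) K.fdss_iff by auto
      have Asub: "K.subspace A" and Amul: "\<And>a b. a\<in>A \<Longrightarrow> b\<in>A \<Longrightarrow> a*b \<in> A" using Ass(1) unfolding K.salg_def by auto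
      have TA: "T \<subseteq> A" using K.span_minimal[of B A] A(1) Asub B(3) by auto
      have "ideal_of scale A (A \<inter> J)" unfolding ideal_of_def
        using K.subspace_inter[OF Asub Jsub] Amul Jl Jr by auto
      then obtain e where e: "e \<in> A \<inter> J" "e*e = e" "\<forall>y\<in>A \<inter> J. e*y = y \<and> y*e = y" "\<forall>a\<in>A. e*a = a*e"
        using K.ideal_unit[OF Ass] by blast
      have Ysub: "Y \<subseteq> {e * j * e | j. j \<in> J}"
      proof
        fix y assume "y \<in> Y"
        then have yAJ: "y \<in> A \<inter> J" using A(1) Y by auto
        have yeq: "y = e*y*e" using e(3) yAJ by auto
        have yJ: "y \<in> J" using yAJ by blast
        show "y \<in> {e * j * e | j. j \<in> J}" using yeq yJ by (intro CollectI exI[of _ y] conjI) (assumption)+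
      qed
      show "\<exists>e\<in>J. e * e = e \<and> Y \<subseteq> {e * j * e | j. j \<in> J} \<and> (\<forall>t\<in>T. e * t = t * e)"
      proof (intro bexI[of _ e] conjI)
        show "e \<in> J" "e*e = e" using e(1,2) by auto
        show "Y \<subseteq> {e * j * e | j. j \<in> J}" by (rule Ysub)
        show "\<forall>t\<in>T. e * t = t * e" using e(4) TA by blast
      qed
    qed
  next
    assume H: "\<forall>Y. finite Y \<and> Y \<subseteq> J \<longrightarrow>
      (\<exists>e\<in>J. e * e = e \<and> Y \<subseteq> {e * j * e | j. j \<in> J} \<and> (\<forall>t\<in>T. e * t = t * e))"
    show "locally_fdss scale UNIV" unfolding locally_fdss_def
    proof (intro allI impI)
      fix F :: "'a set" assume F: "finite F \<and> F \<subseteq> UNIV"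
      have "\<forall>r. \<exists>p. fst p \<in> T \<and> snd p \<in> J \<and> r = fst p + snd p"
      proof
        fix r obtain t j where "t\<in>T" "j\<in>J" "r = t+j" using assms(6) by blast
        then show "\<exists>p. fst p \<in> T \<and> snd p \<in> J \<and> r = fst p + snd p" by (intro exI[of _ "(t,j)"]) (simp only: fst_conv snd_conv)
      qed
      from choice[OF this] obtain f where f: "\<forall>r. fst (f r) \<in> T \<and> snd (f r) \<in> J \<and> r = fst (f r) + snd (f r)"
        by blast
      define tp where "tp r = fst (f r)" for r
      define jp where "jp r = snd (f r)" for r
      have tj: "\<And>r. tp r \<in> T \<and> jp r \<in> J \<and> r = tp r + jp r" unfolding tp_def jp_def by (rule spec[OF f])
      have tjJ: "\<And>r. jp r \<in> J" using tj by blast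
      have "finite (jp ` F) \<and> jp ` F \<subseteq> J" using F tjJ by auto
      from H[rule_format, OF this] obtain e where e: "e \<in> J" "e*e = e" "jp ` F \<subseteq> {e * j * e | j. j \<in> J}" "\<And>t. t\<in>T \<Longrightarrow> e * t = t * e"
        by blast
      define Z where "Z = jp ` F \<union> (\<lambda>b. e*b) ` B \<union> {e}"
      have "finite Z \<and> Z \<subseteq> J" unfolding Z_def using F B(1) tjJ e(1) Jr by auto
      from assms(3)[unfolded locally_fdss_def, rule_format, OF this]
      obtain S0 where S0: "Z \<subseteq> S0" "S0 \<subseteq> J" "fdss_subalgebra scale S0"
        by blast
      have S0ss: "K.salg S0" "K.fd S0" "K.sp S0" using S0(3) unfolding K.fdss_iff by auto
      have S0sub: "K.subspace S0" and S0mul: "\<And>a b. a\<in>S0 \<Longrightarrow> b\<in>S0 \<Longrightarrow> a*b \<in> S0"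
        using S0ss(1) unfolding K.salg_def by auto
      have eS0: "e \<in> S0" using S0(1) unfolding Z_def by auto
      have ee2: "e*(e*z) = e*z" for z using e(2) by (simp add: mult.assoc[symmetric])
      have etS0: "e*t \<in> S0" if "t \<in> T" for t
      proof -
        have "(\<lambda>x. e*x) ` K.span B = K.span ((\<lambda>x. e*x) ` B)"
          using module_hom.span_image[OF K.hom_l[of e], of B] by simp
        moreover have "K.span ((\<lambda>x. e*x) ` B) \<subseteq> S0"
          using K.span_minimal[OF _ S0sub, of "(\<lambda>x. e*x) ` B"] S0(1) unfolding Z_def by auto
        ultimately show ?thesis using that B(3) by auto
      qed
      define S where "S = (\<lambda>x. e*x*e) ` S0"
      define A where "A = {t + s | t s. t \<in> T \<and> s \<in> S}"
      have Ssub: "K.subspace S" unfolding S_def using K.subspace_lr[OF S0sub] .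
      have Asub: "K.subspace A" unfolding A_def using K.subspace_sums[OF Tsub Ssub] .
      have sS: "e*s = s" "s*e = s" if "s \<in> S" for s
        using that unfolding S_def by (auto simp: mult.assoc ee2 e(2))
      have sS0: "S \<subseteq> S0" unfolding S_def using S0mul eS0 by blast
      have inS: "e*x*e \<in> S" if "x \<in> S0" for x unfolding S_def using that by blast
      have TcS: "e*t \<in> S" if "t \<in> T" for t
      proof -
        have "e*(e*t)*e = (e*t)*e" using ee2 by simp
        also have "\<dots> = e*(t*e)" by (simp add: mult.assoc)
        also have "\<dots> = e*t" using e(4)[OF that, symmetric] ee2 by simp
        finally have "e*t = e*(e*t)*e" by simp
        then show ?thesis using inS[OF etS0[OF that]] by simp
      qed
      have SA: "S \<subseteq> A" unfolding A_def using K.subspace_0[OF Tsub] by force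
      have TA: "T \<subseteq> A" unfolding A_def using K.subspace_0[OF Ssub] by force
      have Smul: "x*y \<in> S" if "x \<in> S" "y \<in> S" for x y
      proof -
        have "e*(x*y)*e = (e*x)*(y*e)" by (simp add: mult.assoc)
        also have "\<dots> = x*y" using sS that by simp
        finally have "x*y = e*(x*y)*e" by simp
        moreover have "x*y \<in> S0" using that sS0 S0mul by blast
        ultimately show ?thesis using inS by metis
      qed
      have tsS: "t*s \<in> S" "s*t \<in> S" if "t \<in> T" "s \<in> S" for t s
      proof -
        have "t*s = t*(e*s)" using sS(1)[OF that(2)] by simp
        also have "\<dots> = (t*e)*s" by (simp add: mult.assoc)
        also have "\<dots> = (e*t)*s" using e(4)[OF that(1)] by simp
        finally have "t*s = (e*t)*s" .
        then show "t*s \<in> S" using Smul[OF TcS[OF that(1)] that(2)] by simp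
        have "s*t = (s*e)*t" using sS(2)[OF that(2)] by simp
        also have "\<dots> = s*(e*t)" by (simp add: mult.assoc)
        finally have "s*t = s*(e*t)" .
        then show "s*t \<in> S" using Smul[OF that(2) TcS[OF that(1)]] by simp
      qed
      have salgA: "K.salg A" unfolding K.salg_def
      proof (intro conjI ballI)
        show "K.subspace A" by (rule Asub)
      next
        fix x y assume "x \<in> A" "y \<in> A"
        then obtain t s t' s' where ts: "x = t + s" "y = t' + s'" "t\<in>T" "s\<in>S" "t'\<in>T" "s'\<in>S"
          unfolding A_def by blast
        have "x*y = t*t' + (t*s' + s*t' + s*s')" using ts by (simp add: algebra_simps)
        moreover have "t*s' + s*t' + s*s' \<in> S"
          using tsS ts Smul K.subspace_add[OF Ssub] by simp
        ultimately show "x*y \<in> A" unfolding A_def using Tmul ts by blast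
      qed
      have fdA: "K.fd A"
      proof -
        obtain W0 where W0: "finite W0" "S0 \<subseteq> K.span W0" using S0ss(2) unfolding K.fd_def by blast
        define W where "W = B \<union> (\<lambda>x. e*x*e) ` W0"
        have "S \<subseteq> K.span W"
        proof -
          have "S \<subseteq> (\<lambda>x. e*x*e) ` K.span W0" unfolding S_def using W0(2) by blast
          also have "\<dots> = K.span ((\<lambda>x. e*x*e) ` W0)" using K.span_lr by simp
          also have "\<dots> \<subseteq> K.span W" unfolding W_def by (rule K.span_mono) blast
          finally show ?thesis .
        qed
        moreover have "T \<subseteq> K.span W" using B(3) K.span_mono[of B W] unfolding W_def by blast
        ultimately have "A \<subseteq> K.span W" unfolding A_def using K.span_add by blast
        moreover have "finite W" unfolding W_def using B(1) W0(1) by blast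
        ultimately show ?thesis unfolding K.fd_def by blast
      qed
      have spS: "K.sp S" unfolding K.sp_def
      proof (intro ballI impI)
        fix y assume yS: "y \<in> S" and Hy: "y*y = 0 \<and> (\<forall>a\<in>S. y*a*y = 0)"
        have "y*a*y = 0" if "a \<in> S0" for a
        proof -
          have "y*a*y = (y*e)*a*(e*y)" using sS[OF yS] by simp
          also have "\<dots> = y*(e*a*e)*y" by (simp add: mult.assoc)
          also have "\<dots> = 0" using Hy inS[OF that] by blast
          finally show ?thesis .
        qed
        then show "y = 0" using S0ss(3) yS sS0 Hy unfolding K.sp_def by blast
      qed
      have spA: "K.sp A" unfolding K.sp_def
      proof (intro ballI impI)
        fix x assume xA: "x \<in> A" and Hx: "x*x = 0 \<and> (\<forall>a\<in>A. x*a*x = 0)"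
        obtain t s where ts: "x = t + s" "t \<in> T" "s \<in> S" using xA unfolding A_def by blast
        have eS: "e \<in> S" using inS[OF eS0] e(2) by simp
        have eA: "e \<in> A" using eS SA by blast
        have ex: "e*x = x*e" using ts sS e(4) by (simp add: algebra_simps)
        define u where "u = e*t + s"
        have ux: "u = e*x" unfolding u_def using ts sS by (simp add: algebra_simps)
        have uS: "u \<in> S" unfolding u_def using TcS[OF ts(2)] ts(3) K.subspace_add[OF Ssub] by blast
        have "u*u = x*e*x"
        proof -
          have "u*u = (x*e)*(e*x)" using ux ex by simp
          also have "\<dots> = x*(e*e)*x" by (simp add: mult.assoc)
          finally show ?thesis using e(2) by simp
        qed
        then have uu: "u*u = 0" using Hx eA by simp
        have "u*c*u = 0" if "c \<in> S" for c
        proof -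
          have "u*c*u = (x*e)*c*(e*x)" using ux ex by simp
          also have "\<dots> = x*(e*c*e)*x" by (simp add: mult.assoc)
          also have "\<dots> = x*c*x" using sS[OF that] by simp
          also have "\<dots> = 0" using Hx SA that by blast
          finally show ?thesis .
        qed
        then have "u = 0" using spS uS uu unfolding K.sp_def by blast
        then have "e*t + s = 0" unfolding u_def .
        then have sdef: "s = - (e*t)" using neg_eq_iff_add_eq_0[of "e*t" s] by simp
        have xt: "x = t - e*t" using ts(1) sdef by simp
        have key: "(t - e*t)*a*(t - e*t) = t*a*t - e*(t*a*t)" if "a \<in> T" for a
        proof -
          have c1: "t*(e*z) = e*(t*z)" for z using e(4)[OF ts(2)] by (simp add: mult.assoc[symmetric])
          have c2: "a*(e*z) = e*(a*z)" for z using e(4)[OF that] by (simp add: mult.assoc[symmetric])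
          have c3: "t*e = e*t" "a*e = e*a" using e(4) ts(2) that by auto
          show ?thesis by (simp add: algebra_simps c1 c2 c3 ee2)
        qed
        have zeroJ: "p = 0" if "p \<in> T" "p - e*p = 0" for p
        proof -
          have "p = e*p" using that(2) by simp
          then have "p \<in> J" using Jr[OF e(1), of p] by simp
          then show ?thesis using that(1) assms(5) by blast
        qed
        have "t*t = 0"
        proof -
          have c1: "t*(e*z) = e*(t*z)" for z using e(4)[OF ts(2)] by (simp add: mult.assoc[symmetric])
          have c3: "t*e = e*t" using e(4) ts(2) by auto
          have "(t - e*t)*(t - e*t) = t*t - e*(t*t)" by (simp add: algebra_simps c1 c3 ee2)
          then have "t*t - e*(t*t) = 0" using Hx xt by simp
          then show ?thesis using zeroJ Tmul ts(2) by blast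
        qed
        moreover have "t*a*t = 0" if "a \<in> T" for a
        proof -
          have "t*a*t - e*(t*a*t) = 0" using key[OF that] Hx xt TA that by auto
          then show ?thesis using zeroJ Tmul ts(2) that by blast
        qed
        ultimately have "t = 0" using Tss(3) ts(2) unfolding K.sp_def by blast
        then show "x = 0" using xt by simp
      qed
      have "F \<subseteq> A"
      proof
        fix r assume "r \<in> F"
        then obtain j where j: "jp r = e*j*e" "j \<in> J" using e(3) by blast
        have "e*(jp r)*e = jp r" using j(1) by (simp add: mult.assoc ee2 e(2))
        moreover have "jp r \<in> S0" using S0(1) \<open>r\<in>F\<close> unfolding Z_def by blast
        ultimately have "jp r \<in> S" using inS[of "jp r"] by simp
        moreover have r1: "r = tp r + jp r" "tp r \<in> T" using tj[of r] by blast+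
        ultimately show "r \<in> A" unfolding A_def
          by (intro CollectI exI[of _ "tp r"] exI[of _ "jp r"] conjI) (rule r1(1), rule r1(2), assumption)
      qed
      moreover have "fdss_subalgebra scale A" using K.fdss_iff salgA fdA spA by blast
      ultimately show "\<exists>S. F \<subseteq> S \<and> S \<subseteq> UNIV \<and> fdss_subalgebra scale S" by blast
    qed
  qed
qed


end
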